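(* If a randomized predictor $f\in\Delta(\mathcal{H})$ is $\epsilon$-smoothed-decision calibrated, i.e. $\max_{i\in[N]}\max_{j\in[d]}\max_{a\in A}|\mathbb{E}_{h\sim f}\mathbb{E}_{\mathcal{D}}[(y_j-h(x)_j)\tilde b_i(h(x),a)]|\le\epsilon$, then for quantal-responding receivers it has $\big(2L|A|\epsilon+\frac{\ln|A|+1}{\eta}\big)$-swap regret, type regret and swap-type regret; that is, with $\beta=2L|A|\epsilon+\frac{\ln|A|+1}{\eta}$, for all $i,i'\in[N]$ and all $\phi:A\to A$: $\mathbb{E}_{h\sim f}\mathbb{E}_{\mathcal{D}}[\sum_a v_i(\phi(a),y)\tilde b_i(h(x),a)]\le\mathbb{E}_{h\sim f}\mathbb{E}_{\mathcal{D}}[\sum_a v_i(a,y)\tilde b_i(h(x),a)]+\beta$, $\mathbb{E}_{h\sim f}\mathbb{E}_{\mathcal{D}}[\sum_a v_i(a,y)\tilde b_{i'}(h(x),a)]\le\mathbb{E}_{h\sim f}\mathbb{E}_{\mathcal{D}}[\sum_a v_i(a,y)\tilde b_i(h(x),a)]+\beta$, $\mathbb{E}_{h\sim f}\mathbb{E}_{\mathcal{D}}[\sum_a v_i(\phi(a),y)\tilde b_{i'}(h(x),a)]\le\mathbb{E}_{h\sim f}\mathbb{E}_{\mathcal{D}}[\sum_a v_i(a,y)\tilde b_i(h(x),a)]+\beta$.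
   Context: Data $(x,y)\in\mathcal{X}\times[-1,1]^d$ drawn from $\mathcal{D}$; $\mathcal{H}$ is a class of functions $h:\mathcal{X}\to[-1,1]^d$, $\Delta(\mathcal{H})$ the distributions over it. All $N$ receivers share a common finite action set $A$; receiver $i$ has utility $v_i:A\times[-1,1]^d\to[0,1]$, linear in $y$, with $|v_i(a,y_1)-v_i(a,y_2)|\le L\|y_1-y_2\|_\infty$. For $\eta>0$, the $\eta$-quantal response is $\tilde b_i(z,a)=e^{\eta v_i(a,z)}/\sum_{a'\in A}e^{\eta v_i(a',z)}$. *)

theory Defs
  imports "HOL-Analysis.Analysis"
begin

text \<open>The label space [-1,1]^d, with d the (finite) cardinality of the index type 'd.\<close>
definition cube :: "(real^'d) set" where
  "cube = {y. \<forall>j. \<bar>y $ j\<bar> \<le> 1}"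

definition quantal :: "real \<Rightarrow> 'a set \<Rightarrow> ('a \<Rightarrow> 'y \<Rightarrow> real) \<Rightarrow> 'y \<Rightarrow> 'a \<Rightarrow> real" where
  "quantal \<eta> A u z a = exp (\<eta> * u a z) / (\<Sum>a'\<in>A. exp (\<eta> * u a' z))"

definition EE :: "'h measure \<Rightarrow> ('x \<times> 'y) measure \<Rightarrow> ('h \<Rightarrow> 'x \<Rightarrow> 'y \<Rightarrow> real) \<Rightarrow> real" where
  "EE F D g = (\<integral>h. (\<integral>p. g h (fst p) (snd p) \<partial>D) \<partial>F)"

end

theory Submission imports Defs "HOL-Probability.Probability" begin

lemma softmax_bound:
  fixes u :: "'a \<Rightarrow> real"
  assumes fin: "finite A" and ne: "A \<noteq> {}" and eta: "\<eta> > 0" and a0: "a0 \<in> A"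
  shows "u a0 \<le> (\<Sum>a\<in>A. u a * (exp (\<eta> * u a) / (\<Sum>a'\<in>A. exp (\<eta> * u a')))) + ln (real (card A)) / \<eta>"
proof -
  define Z where "Z = (\<Sum>a'\<in>A. exp (\<eta> * u a'))"
  define b where "b a = exp (\<eta> * u a) / Z" for a
  define n where "n = real (card A)"
  have npos: "n > 0" using fin ne by (simp add: n_def card_gt_0_iff)
  have Zge: "exp (\<eta> * u a0) \<le> Z" unfolding Z_def
    using member_le_sum[OF a0, of "\<lambda>a'. exp (\<eta> * u a')"] fin by auto
  have Zpos: "Z > 0" using Zge exp_gt_zero[of "\<eta> * u a0"] by linarith
  have bpos: "b a > 0" for a using Zpos by (simp add: b_def)
  have bsum: "(\<Sum>a\<in>A. b a) = 1" using Zpos by (simp add: b_def Z_def sum_divide_distrib[symmetric])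
  have lnb: "ln (b a) = \<eta> * u a - ln Z" for a using Zpos by (simp add: b_def ln_div)
  have each: "b a * (- ln n - \<eta> * u a + ln Z) \<le> 1 / n - b a" for a
  proof -
    have "ln (1 / (n * b a)) \<le> 1 / (n * b a) - 1"
      by (rule ln_le_minus_one) (use npos bpos[of a] in simp)
    also have "ln (1 / (n * b a)) = - ln n - \<eta> * u a + ln Z"
      using npos bpos[of a] by (simp add: ln_div ln_mult lnb)
    finally have "- ln n - \<eta> * u a + ln Z \<le> 1 / (n * b a) - 1" .
    from mult_left_mono[OF this, of "b a"] bpos[of a] have "b a * (- ln n - \<eta> * u a + ln Z) \<le> b a * (1 / (n * b a) - 1)" by simp
    also have "b a * (1 / (n * b a) - 1) = 1 / n - b a" using bpos[of a] npos by (simp add: field_simps)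
    finally show ?thesis .
  qed
  have "(\<Sum>a\<in>A. b a * (- ln n - \<eta> * u a + ln Z)) \<le> (\<Sum>a\<in>A. 1 / n - b a)"
    by (rule sum_mono) (rule each)
  also have "\<dots> = 0" using bsum fin ne by (simp add: sum_subtractf n_def)
  finally have "(- ln n + ln Z) * (\<Sum>a\<in>A. b a) - \<eta> * (\<Sum>a\<in>A. u a * b a) \<le> 0"
    by (simp add: algebra_simps sum_distrib_left sum_distrib_right sum_subtractf sum.distrib)
  hence 1: "ln Z \<le> ln n + \<eta> * (\<Sum>a\<in>A. u a * b a)" using bsum by simp
  have "\<eta> * u a0 \<le> ln Z" using Zge Zpos by (metis ln_exp ln_le_cancel_iff exp_gt_zero)
  with 1 have "\<eta> * u a0 \<le> ln n + \<eta> * (\<Sum>a\<in>A. u a * b a)" by simp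
  hence "u a0 \<le> ln n / \<eta> + (\<Sum>a\<in>A. u a * b a)" using eta by (simp add: field_simps)
  thus ?thesis by (simp add: b_def Z_def n_def)
qed

lemma coef_bound:
  fixes w :: "real^'d"
  assumes lin: "\<forall>y. f y = c + w \<bullet> y"
    and lip: "\<forall>y1\<in>cube. \<forall>y2\<in>cube. \<bar>f y1 - f y2\<bar> \<le> L * infnorm (y1 - y2)"
  shows "(\<Sum>j\<in>UNIV. \<bar>w $ j\<bar>) \<le> L"
proof -
  define s :: "real^'d" where "s = (\<chi> j. sgn (w $ j))"
  have sc: "\<bar>s $ j\<bar> \<le> 1" for j by (simp add: s_def sgn_real_def)
  have s_in: "s \<in> cube" "-s \<in> cube" using sc by (auto simp: cube_def)
  have "infnorm s \<le> 1" unfolding infnorm_cart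
    by (rule cSup_least) (use sc in auto)
  hence inf2: "infnorm (s - - s) \<le> 2"
    using infnorm_mul[of 2 s] by (simp add: scaleR_2)
  have ws: "w \<bullet> s = (\<Sum>j\<in>UNIV. \<bar>w $ j\<bar>)"
  proof -
    have e: "(x::real) * sgn x = \<bar>x\<bar>" for x by (cases rule: linorder_cases[of x 0]) auto
    have "w \<bullet> s = (\<Sum>j\<in>UNIV. w $ j * s $ j)" by (simp add: inner_vec_def)
    also have "\<dots> = (\<Sum>j\<in>UNIV. \<bar>w $ j\<bar>)" by (simp add: s_def e)
    finally show ?thesis .
  qed
  have fs: "f s - f (-s) = 2 * (\<Sum>j\<in>UNIV. \<bar>w $ j\<bar>)"
    using lin ws by (simp add: inner_minus_right)
  have "\<bar>f s - f (-s)\<bar> \<le> L * infnorm (s - - s)"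
    using lip s_in by blast
  hence h2: "2 * (\<Sum>j\<in>UNIV. \<bar>w $ j\<bar>) \<le> L * infnorm (s - - s)"
    using fs by linarith
  have one: "(1::real^'d) \<in> cube" "(0::real^'d) \<in> cube" by (auto simp: cube_def)
  have "\<bar>f 1 - f 0\<bar> \<le> L * infnorm ((1::real^'d) - 0)"
    using lip one by blast
  moreover have "infnorm ((1::real^'d) - 0) > 0" by (simp add: infnorm_pos_lt)
  ultimately have L0: "L \<ge> 0"
  proof (intro leI notI)
    assume "\<bar>f 1 - f 0\<bar> \<le> L * infnorm ((1::real^'d) - 0)" "infnorm ((1::real^'d) - 0) > 0" "L < 0"
    moreover from this have "L * infnorm ((1::real^'d) - 0) < 0" by (simp add: mult_neg_pos)
    ultimately show False by linarith
  qed
  have "L * infnorm (s - - s) \<le> L * 2" using mult_left_mono[OF inf2 L0] .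
  with h2 show ?thesis by linarith
qed


lemma EE_prod:
  assumes "prob_space F" "prob_space D"
    and int: "integrable (F \<Otimes>\<^sub>M D) (\<lambda>w. g (fst w) (fst (snd w)) (snd (snd w)))"
  shows "EE F D g = (\<integral>w. g (fst w) (fst (snd w)) (snd (snd w)) \<partial>(F \<Otimes>\<^sub>M D))"
proof -
  interpret pair_prob_space F D
    using assms(1,2) by (simp add: pair_prob_space_def pair_sigma_finite_def prob_space_imp_sigma_finite)
  show ?thesis unfolding EE_def using integral_fst'[OF int] by simp
qed

lemma quantal_pos:
  assumes "finite A" "A \<noteq> {}"
  shows "0 < quantal \<eta> A u z a"
  unfolding quantal_def using assms by (intro divide_pos_pos sum_pos) auto

lemma quantal_le1:
  assumes "finite A" "a \<in> A"
  shows "quantal \<eta> A u z a \<le> 1"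
  unfolding quantal_def using assms
  by (subst divide_le_eq_1_pos) (auto intro!: sum_pos member_le_sum)

lemma quantal_sum:
  assumes "finite A" "A \<noteq> {}"
  shows "(\<Sum>a\<in>A. quantal \<eta> A u z a) = 1"
proof -
  have "(\<Sum>a'\<in>A. exp (\<eta> * u a' z)) > 0" using assms by (intro sum_pos) auto
  thus ?thesis unfolding quantal_def by (simp add: sum_divide_distrib[symmetric])
qed

theorem theorem8:
  fixes D :: "('x \<times> (real^'d)) measure"
    and H :: "('x \<Rightarrow> real^'d) set"
    and F :: "('x \<Rightarrow> real^'d) measure"
    and A :: "'a set"
    and N :: nat
    and v :: "nat \<Rightarrow> 'a \<Rightarrow> real^'d \<Rightarrow> real"
    and L \<eta> \<epsilon> :: real
  assumes D_prob: "emeasure D (space D) = 1"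
    and D_range: "\<forall>p\<in>space D. snd p \<in> cube"
    and H_range: "\<forall>h\<in>H. \<forall>x. h x \<in> cube"
    and F_prob: "emeasure F (space F) = 1"
    and F_support: "space F \<subseteq> H"
    and meas: "(\<lambda>(h, p). (h (fst p), snd p)) \<in> borel_measurable (F \<Otimes>\<^sub>M D)"
    and A_fin: "finite A" and A_ne: "A \<noteq> {}"
    and v_range: "\<forall>i<N. \<forall>a\<in>A. \<forall>y\<in>cube. 0 \<le> v i a y \<and> v i a y \<le> 1"
    and v_linear: "\<forall>i<N. \<forall>a\<in>A. \<exists>c w. \<forall>y. v i a y = c + w \<bullet> y"
    and v_lip: "\<forall>i<N. \<forall>a\<in>A. \<forall>y1\<in>cube. \<forall>y2\<in>cube.
                  \<bar>v i a y1 - v i a y2\<bar> \<le> L * infnorm (y1 - y2)"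
    and eta_pos: "\<eta> > 0"
    and calibrated: "\<forall>i<N. \<forall>j. \<forall>a\<in>A.
           \<bar>EE F D (\<lambda>h x y. (y $ j - h x $ j) * quantal \<eta> A (v i) (h x) a)\<bar> \<le> \<epsilon>"
  defines "\<beta> \<equiv> 2 * L * real (card A) * \<epsilon> + (ln (real (card A)) + 1) / \<eta>"
  shows "\<forall>i<N. \<forall>i'<N. \<forall>\<phi>. \<phi> ` A \<subseteq> A \<longrightarrow>
     EE F D (\<lambda>h x y. \<Sum>a\<in>A. v i (\<phi> a) y * quantal \<eta> A (v i) (h x) a)
       \<le> EE F D (\<lambda>h x y. \<Sum>a\<in>A. v i a y * quantal \<eta> A (v i) (h x) a) + \<beta>
   \<and> EE F D (\<lambda>h x y. \<Sum>a\<in>A. v i a y * quantal \<eta> A (v i') (h x) a)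
       \<le> EE F D (\<lambda>h x y. \<Sum>a\<in>A. v i a y * quantal \<eta> A (v i) (h x) a) + \<beta>
   \<and> EE F D (\<lambda>h x y. \<Sum>a\<in>A. v i (\<phi> a) y * quantal \<eta> A (v i') (h x) a)
       \<le> EE F D (\<lambda>h x y. \<Sum>a\<in>A. v i a y * quantal \<eta> A (v i) (h x) a) + \<beta>"
proof -
  interpret F: prob_space F by (rule prob_spaceI) (rule F_prob)
  interpret D: prob_space D by (rule prob_spaceI) (rule D_prob)
  interpret FD: pair_prob_space F D
    by (simp add: pair_prob_space_def pair_sigma_finite_def prob_space_imp_sigma_finite
        F.prob_space_axioms D.prob_space_axioms)
  define M where "M = F \<Otimes>\<^sub>M D"
  interpret P: prob_space M unfolding M_def by (rule FD.P.prob_space_axioms)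
  have spaceM: "space M = space F \<times> space D" by (simp add: M_def space_pair_measure)
  define Z where "Z w = fst w (fst (snd w))" for w :: "('x \<Rightarrow> real^'d) \<times> ('x \<times> (real^'d))"
  define Y where "Y w = snd (snd w)" for w :: "('x \<Rightarrow> real^'d) \<times> ('x \<times> (real^'d))"
  have ZY_cube: "Z w \<in> cube" "Y w \<in> cube" if "w \<in> space M" for w
    using that F_support H_range D_range by (auto simp: spaceM Z_def Y_def)
  have fstm: "(fst :: (real^'d) \<times> (real^'d) \<Rightarrow> real^'d) \<in> borel_measurable borel"
    using measurable_fst[of "borel :: (real^'d) measure" "borel :: (real^'d) measure"]
    by (simp add: borel_prod)
  have sndm: "(snd :: (real^'d) \<times> (real^'d) \<Rightarrow> real^'d) \<in> borel_measurable borel"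
    using measurable_snd[of "borel :: (real^'d) measure" "borel :: (real^'d) measure"]
    by (simp add: borel_prod)
  have Zm[measurable]: "Z \<in> borel_measurable M"
    unfolding Z_def using measurable_compose[OF meas fstm] by (simp add: M_def split_beta)
  have Ym[measurable]: "Y \<in> borel_measurable M"
    unfolding Y_def using measurable_compose[OF meas sndm] by (simp add: M_def split_beta)
  have "\<forall>ia. \<exists>cw. fst ia < N \<and> snd ia \<in> A \<longrightarrow> (\<forall>y. v (fst ia) (snd ia) y = fst cw + snd cw \<bullet> y)"
    using v_linear by auto
  then obtain CW where CW: "\<And>ia. fst ia < N \<and> snd ia \<in> A \<longrightarrow> (\<forall>y. v (fst ia) (snd ia) y = fst (CW ia) + snd (CW ia) \<bullet> y)"
    by metis
  define C where "C i a = fst (CW (i, a))" for i a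
  define W where "W i a = snd (CW (i, a))" for i a
  have vlin: "v i a y = C i a + W i a \<bullet> y" if "i < N" "a \<in> A" for i a y
    using CW[of "(i, a)"] that by (simp add: C_def W_def)
  have vYm: "(\<lambda>w. v i a (Y w)) \<in> borel_measurable M" if "i < N" "a \<in> A" for i a
  proof -
    have "(\<lambda>w. C i a + W i a \<bullet> Y w) \<in> borel_measurable M" by measurable
    thus ?thesis using vlin[OF that] by simp
  qed
  have vZm: "(\<lambda>w. v i a (Z w)) \<in> borel_measurable M" if "i < N" "a \<in> A" for i a
  proof -
    have "(\<lambda>w. C i a + W i a \<bullet> Z w) \<in> borel_measurable M" by measurable
    thus ?thesis using vlin[OF that] by simp
  qed
  define q where "q k a w = quantal \<eta> A (v k) (Z w) a" for k a w
  have qm: "q k a \<in> borel_measurable M" if "k < N" "a \<in> A" for k a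
  proof -
    have e: "(\<lambda>w. exp (\<eta> * v k b (Z w))) \<in> borel_measurable M" if "b \<in> A" for b
      using measurable_compose[OF borel_measurable_times[OF borel_measurable_const vZm[OF \<open>k < N\<close> that]] borel_measurable_exp]
      by (simp add: o_def)
    show ?thesis unfolding q_def quantal_def
      by (intro borel_measurable_divide borel_measurable_sum e that)
  qed
  have compm: "(\<lambda>w. Y w $ j - Z w $ j) \<in> borel_measurable M" for j
  proof -
    have vn: "(\<lambda>x::real^'d. x $ j) \<in> borel_measurable borel"
      by (intro borel_measurable_continuous_onI continuous_on_component continuous_on_id)
    show ?thesis
      by (intro borel_measurable_diff measurable_compose[OF Ym vn] measurable_compose[OF Zm vn])
  qed
  have q01: "0 \<le> q k a w" "q k a w \<le> 1" if "a \<in> A" for k a w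
    using quantal_pos[OF A_fin A_ne, of \<eta> "v k" "Z w" a] quantal_le1[OF A_fin that, of \<eta> "v k" "Z w"] unfolding q_def
    by auto
  have qsum: "(\<Sum>a\<in>A. q k a w) = 1" for k w
    unfolding q_def by (rule quantal_sum[OF A_fin A_ne])
  have intI: "integrable M f" if "f \<in> borel_measurable M" "\<And>w. w \<in> space M \<Longrightarrow> \<bar>f w\<bar> \<le> B" for f :: "_ \<Rightarrow> real" and B :: real
    by (rule P.integrable_const_bound[where B=B]) (use that in auto)
  have vY01: "0 \<le> v i a (Y w)" "v i a (Y w) \<le> 1" if "i < N" "a \<in> A" "w \<in> space M" for i a w
    using v_range ZY_cube[OF that(3)] that by auto
  have vZ01: "0 \<le> v i a (Z w)" "v i a (Z w) \<le> 1" if "i < N" "a \<in> A" "w \<in> space M" for i a w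
    using v_range ZY_cube[OF that(3)] that by auto
  have int_vYq: "integrable M (\<lambda>w. v i b (Y w) * q k a w)" if "i < N" "b \<in> A" "k < N" "a \<in> A" for i b k a
  proof (rule intI[of _ 1])
    show "(\<lambda>w. v i b (Y w) * q k a w) \<in> borel_measurable M"
      by (intro borel_measurable_times vYm qm that)
  next
    fix w assume w: "w \<in> space M"
    have h: "0 \<le> v i b (Y w)" "v i b (Y w) \<le> 1" using vY01[OF that(1,2) w] by auto
    have g: "0 \<le> q k a w" "q k a w \<le> 1" using q01[OF that(4)] by auto
    have "v i b (Y w) * q k a w \<le> 1" using h g by (intro mult_le_one) auto
    moreover have "0 \<le> v i b (Y w) * q k a w" using h g by simp
    ultimately show "\<bar>v i b (Y w) * q k a w\<bar> \<le> 1" by simp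
  qed
  have int_vZq: "integrable M (\<lambda>w. v i b (Z w) * q k a w)" if "i < N" "b \<in> A" "k < N" "a \<in> A" for i b k a
  proof (rule intI[of _ 1])
    show "(\<lambda>w. v i b (Z w) * q k a w) \<in> borel_measurable M"
      by (intro borel_measurable_times vZm qm that)
  next
    fix w assume w: "w \<in> space M"
    have h: "0 \<le> v i b (Z w)" "v i b (Z w) \<le> 1" using vZ01[OF that(1,2) w] by auto
    have g: "0 \<le> q k a w" "q k a w \<le> 1" using q01[OF that(4)] by auto
    have "v i b (Z w) * q k a w \<le> 1" using h g by (intro mult_le_one) auto
    moreover have "0 \<le> v i b (Z w) * q k a w" using h g by simp
    ultimately show "\<bar>v i b (Z w) * q k a w\<bar> \<le> 1" by simp
  qed
  have int_comp: "integrable M (\<lambda>w. (Y w $ j - Z w $ j) * q k a w)" if "k < N" "a \<in> A" for j k a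
  proof (rule intI[of _ 2])
    show "(\<lambda>w. (Y w $ j - Z w $ j) * q k a w) \<in> borel_measurable M"
      using compm qm[OF that] by (intro borel_measurable_times) auto
  next
    fix w assume w: "w \<in> space M"
    have "\<bar>Y w $ j\<bar> \<le> 1" "\<bar>Z w $ j\<bar> \<le> 1" using ZY_cube[OF w] by (auto simp: cube_def)
    hence c1: "\<bar>Y w $ j - Z w $ j\<bar> \<le> 2" by linarith
    have c2: "\<bar>q k a w\<bar> \<le> 1" using q01[OF that(2)] by auto
    show "\<bar>(Y w $ j - Z w $ j) * q k a w\<bar> \<le> 2"
    proof -
      have "\<bar>Y w $ j - Z w $ j\<bar> * \<bar>q k a w\<bar> \<le> 2 * 1"
        using c1 c2 by (intro mult_mono) auto
      thus ?thesis by (simp add: abs_mult)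
    qed
  qed
  have calib: "\<bar>\<integral>w. (Y w $ j - Z w $ j) * q k a w \<partial>M\<bar> \<le> \<epsilon>" if "k < N" "a \<in> A" for j k a
  proof -
    have "EE F D (\<lambda>h x y. (y $ j - h x $ j) * quantal \<eta> A (v k) (h x) a) = (\<integral>w. (Y w $ j - Z w $ j) * q k a w \<partial>M)"
      using EE_prod[OF F.prob_space_axioms D.prob_space_axioms, of "\<lambda>h x y. (y $ j - h x $ j) * quantal \<eta> A (v k) (h x) a"]
        int_comp[OF that, of j]
      by (simp add: M_def Y_def Z_def q_def)
    moreover have "\<bar>EE F D (\<lambda>h x y. (y $ j - h x $ j) * quantal \<eta> A (v k) (h x) a)\<bar> \<le> \<epsilon>"
      using calibrated that by blast
    ultimately show ?thesis by simp
  qed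
  have stepA: "\<bar>(\<integral>w. v i b (Y w) * q k a w \<partial>M) - (\<integral>w. v i b (Z w) * q k a w \<partial>M)\<bar> \<le> L * \<epsilon>"
    if "i < N" "b \<in> A" "k < N" "a \<in> A" for i b k a
  proof -
    have eps0: "0 \<le> \<epsilon>" using calib[OF that(3,4)] by (meson abs_ge_zero order_trans)
    have "(\<integral>w. v i b (Y w) * q k a w \<partial>M) - (\<integral>w. v i b (Z w) * q k a w \<partial>M)
        = (\<integral>w. v i b (Y w) * q k a w - v i b (Z w) * q k a w \<partial>M)"
      using int_vYq[OF that] int_vZq[OF that] by simp
    also have "\<dots> = (\<integral>w. (\<Sum>j\<in>UNIV. W i b $ j * ((Y w $ j - Z w $ j) * q k a w)) \<partial>M)"
    proof (rule Bochner_Integration.integral_cong[OF refl])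
      fix w
      have "v i b (Y w) * q k a w - v i b (Z w) * q k a w = (W i b \<bullet> (Y w - Z w)) * q k a w"
        using vlin[OF that(1,2)] by (simp add: inner_diff_right ring_distribs)
      also have "\<dots> = (\<Sum>j\<in>UNIV. W i b $ j * ((Y w $ j - Z w $ j) * q k a w))"
        by (simp add: inner_vec_def sum_distrib_right mult.assoc)
      finally show "v i b (Y w) * q k a w - v i b (Z w) * q k a w = (\<Sum>j\<in>UNIV. W i b $ j * ((Y w $ j - Z w $ j) * q k a w))" .
    qed
    also have "\<dots> = (\<Sum>j\<in>UNIV. W i b $ j * (\<integral>w. (Y w $ j - Z w $ j) * q k a w \<partial>M))"
      using Bochner_Integration.integral_sum[where M=M and I=UNIV and f="\<lambda>j w. W i b $ j * ((Y w $ j - Z w $ j) * q k a w)"] int_comp[OF that(3,4)]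
      by simp
    finally have eq: "(\<integral>w. v i b (Y w) * q k a w \<partial>M) - (\<integral>w. v i b (Z w) * q k a w \<partial>M) = \<dots>" .
    have "\<bar>\<Sum>j\<in>UNIV. W i b $ j * (\<integral>w. (Y w $ j - Z w $ j) * q k a w \<partial>M)\<bar>
        \<le> (\<Sum>j\<in>UNIV. \<bar>W i b $ j\<bar> * \<epsilon>)"
    proof (rule order_trans[OF sum_abs], rule sum_mono)
      fix j :: 'd
      have "\<bar>W i b $ j\<bar> * \<bar>\<integral>w. (Y w $ j - Z w $ j) * q k a w \<partial>M\<bar> \<le> \<bar>W i b $ j\<bar> * \<epsilon>"
        by (rule mult_left_mono[OF calib[OF that(3,4)]]) simp
      thus "\<bar>W i b $ j * (\<integral>w. (Y w $ j - Z w $ j) * q k a w \<partial>M)\<bar> \<le> \<bar>W i b $ j\<bar> * \<epsilon>"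
        by (simp add: abs_mult)
    qed
    also have "\<dots> = (\<Sum>j\<in>UNIV. \<bar>W i b $ j\<bar>) * \<epsilon>" by (simp add: sum_distrib_right)
    also have "\<dots> \<le> L * \<epsilon>"
    proof (rule mult_right_mono[OF _ eps0], rule coef_bound)
      show "\<forall>y. v i b y = C i b + W i b \<bullet> y" using vlin[OF that(1,2)] by simp
      show "\<forall>y1\<in>cube. \<forall>y2\<in>cube. \<bar>v i b y1 - v i b y2\<bar> \<le> L * infnorm (y1 - y2)"
        using v_lip that(1,2) by blast
    qed
    finally show ?thesis using eq by simp
  qed
  have pointwise: "(\<Sum>a\<in>A. v i (\<psi> a) (Z w) * q k a w)
      \<le> (\<Sum>a\<in>A. v i a (Z w) * q i a w) + ln (real (card A)) / \<eta>"
    if "\<psi> ` A \<subseteq> A" for i k \<psi> w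
  proof -
    define S where "S = (\<Sum>a\<in>A. v i a (Z w) * q i a w) + ln (real (card A)) / \<eta>"
    have b: "v i (\<psi> a) (Z w) \<le> S" if "a \<in> A" for a
    proof -
      have "\<psi> a \<in> A" using that \<open>\<psi> ` A \<subseteq> A\<close> by auto
      from softmax_bound[OF A_fin A_ne eta_pos this, of "\<lambda>a. v i a (Z w)"]
      show ?thesis by (simp add: S_def q_def quantal_def)
    qed
    have "(\<Sum>a\<in>A. v i (\<psi> a) (Z w) * q k a w) \<le> (\<Sum>a\<in>A. S * q k a w)"
    proof (rule sum_mono)
      fix a assume "a \<in> A"
      show "v i (\<psi> a) (Z w) * q k a w \<le> S * q k a w"
        by (rule mult_right_mono[OF b[OF \<open>a \<in> A\<close>] q01(1)[OF \<open>a \<in> A\<close>]])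
    qed
    also have "\<dots> = S" using qsum[of k w] by (simp add: sum_distrib_left[symmetric])
    finally show ?thesis by (simp add: S_def)
  qed
  have main: "EE F D (\<lambda>h x y. \<Sum>a\<in>A. v i (\<psi> a) y * quantal \<eta> A (v k) (h x) a)
       \<le> EE F D (\<lambda>h x y. \<Sum>a\<in>A. v i a y * quantal \<eta> A (v i) (h x) a) + \<beta>"
    if i: "i < N" and k: "k < N" and psi: "\<psi> ` A \<subseteq> A" for i k \<psi>
  proof -
    have psiA: "\<psi> a \<in> A" if "a \<in> A" for a using psi that by auto
    have int1: "integrable M (\<lambda>w. \<Sum>a\<in>A. v i (\<psi> a) (Y w) * q k a w)"
      using int_vYq[OF i psiA k] by auto
    have int0: "integrable M (\<lambda>w. \<Sum>a\<in>A. v i a (Y w) * q i a w)"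
      using int_vYq[OF i _ i] by auto
    have int1Z: "integrable M (\<lambda>w. \<Sum>a\<in>A. v i (\<psi> a) (Z w) * q k a w)"
      using int_vZq[OF i psiA k] by auto
    have int0Z: "integrable M (\<lambda>w. \<Sum>a\<in>A. v i a (Z w) * q i a w)"
      using int_vZq[OF i _ i] by auto
    have E1: "EE F D (\<lambda>h x y. \<Sum>a\<in>A. v i (\<psi> a) y * quantal \<eta> A (v k) (h x) a)
        = (\<integral>w. (\<Sum>a\<in>A. v i (\<psi> a) (Y w) * q k a w) \<partial>M)"
      using EE_prod[OF F.prob_space_axioms D.prob_space_axioms,
          of "\<lambda>h x y. \<Sum>a\<in>A. v i (\<psi> a) y * quantal \<eta> A (v k) (h x) a"] int1
      by (simp add: M_def Y_def Z_def q_def)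
    have E0: "EE F D (\<lambda>h x y. \<Sum>a\<in>A. v i a y * quantal \<eta> A (v i) (h x) a)
        = (\<integral>w. (\<Sum>a\<in>A. v i a (Y w) * q i a w) \<partial>M)"
      using EE_prod[OF F.prob_space_axioms D.prob_space_axioms,
          of "\<lambda>h x y. \<Sum>a\<in>A. v i a y * quantal \<eta> A (v i) (h x) a"] int0
      by (simp add: M_def Y_def Z_def q_def)
    define c where "c = ln (real (card A)) / \<eta>"
    have "(\<integral>w. (\<Sum>a\<in>A. v i (\<psi> a) (Y w) * q k a w) \<partial>M)
        = (\<Sum>a\<in>A. (\<integral>w. v i (\<psi> a) (Y w) * q k a w \<partial>M))"
      using Bochner_Integration.integral_sum[where M=M and I=A and f="\<lambda>a w. v i (\<psi> a) (Y w) * q k a w"]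
        int_vYq[OF i psiA k] by simp
    also have "\<dots> \<le> (\<Sum>a\<in>A. (\<integral>w. v i (\<psi> a) (Z w) * q k a w \<partial>M) + L * \<epsilon>)"
      by (rule sum_mono) (use stepA[OF i psiA k] in force)
    also have "\<dots> = (\<integral>w. (\<Sum>a\<in>A. v i (\<psi> a) (Z w) * q k a w) \<partial>M) + real (card A) * (L * \<epsilon>)"
      using Bochner_Integration.integral_sum[where M=M and I=A and f="\<lambda>a w. v i (\<psi> a) (Z w) * q k a w"]
        int_vZq[OF i psiA k] by (simp add: sum.distrib)
    also have "(\<integral>w. (\<Sum>a\<in>A. v i (\<psi> a) (Z w) * q k a w) \<partial>M)
        \<le> (\<integral>w. (\<Sum>a\<in>A. v i a (Z w) * q i a w) + c \<partial>M)"
      by (rule integral_mono[OF int1Z]) (use int0Z pointwise[OF psi] in \<open>auto simp: c_def\<close>)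
    also have "\<dots> = (\<integral>w. (\<Sum>a\<in>A. v i a (Z w) * q i a w) \<partial>M) + c"
      using int0Z by (simp add: P.prob_space)
    also have "(\<integral>w. (\<Sum>a\<in>A. v i a (Z w) * q i a w) \<partial>M)
        = (\<Sum>a\<in>A. (\<integral>w. v i a (Z w) * q i a w \<partial>M))"
      using Bochner_Integration.integral_sum[where M=M and I=A and f="\<lambda>a w. v i a (Z w) * q i a w"]
        int_vZq[OF i _ i] by simp
    also have "\<dots> \<le> (\<Sum>a\<in>A. (\<integral>w. v i a (Y w) * q i a w \<partial>M) + L * \<epsilon>)"
      by (rule sum_mono) (use stepA[OF i _ i] in force)
    also have "\<dots> = (\<integral>w. (\<Sum>a\<in>A. v i a (Y w) * q i a w) \<partial>M) + real (card A) * (L * \<epsilon>)"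
      using Bochner_Integration.integral_sum[where M=M and I=A and f="\<lambda>a w. v i a (Y w) * q i a w"]
        int_vYq[OF i _ i] by (simp add: sum.distrib)
    finally have "(\<integral>w. (\<Sum>a\<in>A. v i (\<psi> a) (Y w) * q k a w) \<partial>M)
        \<le> (\<integral>w. (\<Sum>a\<in>A. v i a (Y w) * q i a w) \<partial>M) + 2 * L * real (card A) * \<epsilon> + c"
      by (simp add: algebra_simps)
    moreover have "c \<le> (ln (real (card A)) + 1) / \<eta>"
      using eta_pos by (simp add: c_def divide_right_mono add_divide_distrib)
    ultimately show ?thesis unfolding E1 E0 \<beta>_def by linarith
  qed
  show ?thesis
  proof (intro allI impI conjI)
    fix i i' \<phi> assume i: "i < N" and i': "i' < N" and phi: "\<phi> ` A \<subseteq> A"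
    show "EE F D (\<lambda>h x y. \<Sum>a\<in>A. v i (\<phi> a) y * quantal \<eta> A (v i) (h x) a)
       \<le> EE F D (\<lambda>h x y. \<Sum>a\<in>A. v i a y * quantal \<eta> A (v i) (h x) a) + \<beta>"
      by (rule main[OF i i phi])
    show "EE F D (\<lambda>h x y. \<Sum>a\<in>A. v i a y * quantal \<eta> A (v i') (h x) a)
       \<le> EE F D (\<lambda>h x y. \<Sum>a\<in>A. v i a y * quantal \<eta> A (v i) (h x) a) + \<beta>"
      using main[OF i i', of "\<lambda>a. a"] by simp
    show "EE F D (\<lambda>h x y. \<Sum>a\<in>A. v i (\<phi> a) y * quantal \<eta> A (v i') (h x) a)
       \<le> EE F D (\<lambda>h x y. \<Sum>a\<in>A. v i a y * quantal \<eta> A (v i) (h x) a) + \<beta>"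
      by (rule main[OF i i' phi])
  qed
qed

end
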